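(* $\mathrm{Aut}(L_{\mathbb Z})=O(3,1;\mathbb Z)$.
   Context: Let $L_{\mathbb Z}=\{(y_0,y_1,y_2,y_3)^T\in\mathbb Z^4:-y_0^2+y_1^2+y_2^2+y_3^2=0\}$ be the set of integer points on the Lorentz light cone, and let $\mathrm{Aut}(L_{\mathbb Z})$ be the group of invertible real linear transformations $U$ of $\mathbb R^4$ with $U(L_{\mathbb Z})=L_{\mathbb Z}$. Let $Q_L=\mathrm{diag}(-1,1,1,1)$ and $O(3,1;\mathbb Z)=\{U\in M_4(\mathbb Z):U^TQ_LU=Q_L\}$. *)

theory Defs
  imports "HOL-Analysis.Analysis" "HOL-Library.Numeral_Type"
begin

text \<open>Vectors in R^4 are real^4 with coordinates y_0,y_1,y_2,y_3 stored at indices 1,2,3,4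
  of the index type 4 (these four indices are distinct).\<close>

definition Q_L :: "real^4^4" where
  "Q_L = (\<chi> i j. if i = j then (if i = 1 then -1 else 1) else 0)"

definition L_Z :: "(real^4) set" where
  "L_Z = {y. (\<forall>i. y $ i \<in> \<int>) \<and>
              -((y $ 1)^2) + (y $ 2)^2 + (y $ 3)^2 + (y $ 4)^2 = 0}"

definition Aut_L_Z :: "(real^4^4) set" where
  "Aut_L_Z = {U. invertible U \<and> (\<lambda>y. U *v y) ` L_Z = L_Z}"

definition O31Z :: "(real^4^4) set" where
  "O31Z = {U. (\<forall>i j. U $ i $ j \<in> \<int>) \<and> transpose U ** Q_L ** U = Q_L}"

end

theory Submission
  imports Defs
begin

definition G :: "real^4^4 \<Rightarrow> 4 \<Rightarrow> 4 \<Rightarrow> real" where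
  "G U i j = -(U$1$i*U$1$j) + U$2$i*U$2$j + U$3$i*U$3$j + U$4$i*U$4$j"

definition mk4 :: "real \<Rightarrow> real \<Rightarrow> real \<Rightarrow> real \<Rightarrow> real^4" where
  "mk4 a b c d = (\<chi> i. if i = 1 then a else if i = 2 then b else if i = 3 then c else d)"

lemma mk4_nth[simp]: "mk4 a b c d $ 1 = a" "mk4 a b c d $ 2 = b" "mk4 a b c d $ 3 = c" "mk4 a b c d $ 4 = d"
  by (simp_all add: mk4_def)

lemma gram: "(transpose U ** Q_L ** U) $ i $ j = G U i j"
  by (simp add: matrix_matrix_mult_def transpose_def Q_L_def sum_4 G_def)

lemma mv: "((U::real^4^4) *v y)$i = U$i$1*y$1 + U$i$2*y$2 + U$i$3*y$3 + U$i$4*y$4"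
  by (simp add: matrix_vector_mult_def sum_4)

lemma QL: "Q_L $ i $ j = (if i = j then (if i = 1 then -1 else 1) else 0)"
  by (simp add: Q_L_def)

lemma G_sym: "G U i j = G U j i" by (simp add: G_def mult.commute)

definition qf :: "real^4 \<Rightarrow> real" where
  "qf y = -((y$1)^2) + (y$2)^2 + (y$3)^2 + (y$4)^2"

lemma qf_mk4: "qf (U *v mk4 a b c d)
  = a^2*G U 1 1 + b^2*G U 2 2 + c^2*G U 3 3 + d^2*G U 4 4 + 2*a*b*G U 1 2 + 2*a*c*G U 1 3 + 2*a*d*G U 1 4
    + 2*b*c*G U 2 3 + 2*b*d*G U 2 4 + 2*c*d*G U 3 4"
  by (simp add: qf_def mv G_def power2_eq_square algebra_simps)

lemma mk4_L: "a \<in> \<int> \<Longrightarrow> b \<in> \<int> \<Longrightarrow> c \<in> \<int> \<Longrightarrow> d \<in> \<int> \<Longrightarrow> -(a^2)+b^2+c^2+d^2 = 0 \<Longrightarrow> mk4 a b c d \<in> L_Z"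
  unfolding L_Z_def by (auto simp: forall_4)

lemma into:
  assumes H: "\<And>y. y \<in> L_Z \<Longrightarrow> U *v y \<in> L_Z"
  shows "\<exists>l. (\<forall>i j. G U i j = l * Q_L$i$j) \<and> l \<in> \<int>"
    and "U$i$1 + U$i$k \<in> \<int>" and "U$i$1 - U$i$k \<in> \<int>"
proof -
  have z: "qf (U *v mk4 a b c d) = 0" if "a \<in> \<int>" "b \<in> \<int>" "c \<in> \<int>" "d \<in> \<int>" "-(a^2)+b^2+c^2+d^2 = 0" for a b c d
    using H[OF mk4_L[OF that]] unfolding L_Z_def qf_def by auto
  have iv: "(U *v mk4 a b c d) $ i \<in> \<int>" if "a \<in> \<int>" "b \<in> \<int>" "c \<in> \<int>" "d \<in> \<int>" "-(a^2)+b^2+c^2+d^2 = 0" for a b c d i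
    using H[OF mk4_L[OF that]] unfolding L_Z_def by auto
  have e1: "qf (U *v mk4 1 1 0 0) = 0" "qf (U *v mk4 1 (-1) 0 0) = 0"
    "qf (U *v mk4 1 0 1 0) = 0" "qf (U *v mk4 1 0 (-1) 0) = 0"
    "qf (U *v mk4 1 0 0 1) = 0" "qf (U *v mk4 1 0 0 (-1)) = 0"
    "qf (U *v mk4 5 3 4 0) = 0" "qf (U *v mk4 5 3 0 4) = 0" "qf (U *v mk4 5 0 3 4) = 0"
    by (rule z; simp)+
  note e2 = e1[unfolded qf_mk4]
  have g: "G U 1 2 = 0" "G U 1 3 = 0" "G U 1 4 = 0" "G U 2 2 = - G U 1 1" "G U 3 3 = - G U 1 1" "G U 4 4 = - G U 1 1"
    using e2(1-6) by simp_all
  have g2: "G U 2 3 = 0" "G U 2 4 = 0" "G U 3 4 = 0"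
    using e2(7-9) g by simp_all
  define l where "l = - G U 1 1"
  have Gl: "\<forall>i j. G U i j = l * Q_L$i$j"
    unfolding forall_4 QL l_def using g g2 G_sym[of U] by auto
  have x: "(U *v mk4 1 1 0 0) $ i \<in> \<int>" "(U *v mk4 1 0 1 0) $ i \<in> \<int>" for i
    by (rule iv; simp)+
  have "l = -(-((U *v mk4 1 1 0 0) $ 1 * (U *v mk4 1 0 1 0) $ 1) + (U *v mk4 1 1 0 0) $ 2 * (U *v mk4 1 0 1 0) $ 2
      + (U *v mk4 1 1 0 0) $ 3 * (U *v mk4 1 0 1 0) $ 3 + (U *v mk4 1 1 0 0) $ 4 * (U *v mk4 1 0 1 0) $ 4)"
    using g g2 G_sym[of U 2 1] G_sym[of U 3 1] unfolding l_def by (simp add: mv G_def algebra_simps)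
  also have "\<dots> \<in> \<int>" using x by (intro Ints_minus Ints_add Ints_mult) auto
  finally show "\<exists>l. (\<forall>i j. G U i j = l * Q_L$i$j) \<and> l \<in> \<int>" using Gl by blast
  have p: "U$i$1 + U$i$k \<in> \<int> \<and> U$i$1 - U$i$k \<in> \<int>" if "k \<noteq> 1" for k
  proof -
    have "(U *v mk4 1 1 0 0) $ i \<in> \<int>" "(U *v mk4 1 (-1) 0 0) $ i \<in> \<int>"
         "(U *v mk4 1 0 1 0) $ i \<in> \<int>" "(U *v mk4 1 0 (-1) 0) $ i \<in> \<int>"
         "(U *v mk4 1 0 0 1) $ i \<in> \<int>" "(U *v mk4 1 0 0 (-1)) $ i \<in> \<int>"
      by (rule iv; simp)+
    then show ?thesis using that exhaust_4[of k] by (auto simp: mv)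
  qed
  have "U$i$1 + U$i$2 \<in> \<int>" "U$i$1 - U$i$2 \<in> \<int>" using p[of 2] by auto
  then have "(U$i$1 + U$i$2) + (U$i$1 - U$i$2) \<in> \<int>" by (rule Ints_add)
  then have "U$i$1 + U$i$1 \<in> \<int>" by (simp add: algebra_simps)
  then show "U$i$1 + U$i$k \<in> \<int>" using p[of k] by (cases "k = 1") auto
  show "U$i$1 - U$i$k \<in> \<int>" using p[of k] by (cases "k = 1") auto
qed

lemma vec_mk4: "z = mk4 (z$1) (z$2) (z$3) (z$4)"
  by (simp add: vec_eq_iff forall_4)

lemma qf_scale:
  assumes "\<forall>i j. G U i j = l * Q_L$i$j"
  shows "qf (U *v z) = l * qf z"
proof -
  have "qf (U *v z) = qf (U *v mk4 (z$1) (z$2) (z$3) (z$4))" using vec_mk4[of z] by simp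
  also have "\<dots> = l * qf z" unfolding qf_mk4 using assms by (simp add: QL qf_def algebra_simps)
  finally show ?thesis .
qed

lemma QQ: "Q_L ** Q_L = mat 1"
  by (simp add: vec_eq_iff forall_4 matrix_matrix_mult_def sum_4 QL mat_def)

lemma Vent: "(Q_L ** transpose U ** Q_L) $ i $ j = (if i = 1 then -1 else 1) * U$j$i * (if j = 1 then -1 else 1)"
  using exhaust_4[of i] exhaust_4[of j]
  by (auto simp: matrix_matrix_mult_def sum_4 QL transpose_def)

lemma O31Z_iff: "U \<in> O31Z \<longleftrightarrow> (\<forall>i j. U$i$j \<in> \<int>) \<and> (\<forall>i j. G U i j = Q_L$i$j)"
  unfolding O31Z_def by (auto simp: vec_eq_iff gram)

lemma V_left:
  assumes "\<forall>i j. G U i j = Q_L$i$j"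
  shows "(Q_L ** transpose U ** Q_L) ** U = mat 1"
proof -
  have "transpose U ** Q_L ** U = Q_L" using assms by (simp add: vec_eq_iff gram)
  then show ?thesis by (metis QQ matrix_mul_assoc)
qed

lemma mvZ: "(\<forall>i j. (U::real^4^4)$i$j \<in> \<int>) \<Longrightarrow> (\<forall>i. y$i \<in> \<int>) \<Longrightarrow> (U *v y) $ i \<in> \<int>"
  unfolding mv by (intro Ints_add Ints_mult) auto

lemma L_Z_qf: "y \<in> L_Z \<longleftrightarrow> (\<forall>i. y$i \<in> \<int>) \<and> qf y = 0"
  unfolding L_Z_def qf_def by auto

lemma O_sub_Aut: assumes "U \<in> O31Z" shows "U \<in> Aut_L_Z"
proof -
  have Z: "\<forall>i j. U$i$j \<in> \<int>" and GQ: "\<forall>i j. G U i j = Q_L$i$j" using assms O31Z_iff by auto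
  define V where "V = Q_L ** transpose U ** Q_L"
  have VU: "V ** U = mat 1" using V_left[OF GQ] V_def by simp
  then have UV: "U ** V = mat 1" using matrix_left_right_inverse by blast
  have inv: "invertible U" using VU UV invertible_def by blast
  have VZ: "\<forall>i j. V$i$j \<in> \<int>" using Z by (auto simp: V_def Vent)
  have GQ1: "\<forall>i j. G U i j = 1 * Q_L$i$j" using GQ by simp
  have pres: "qf (U *v z) = qf z" for z using qf_scale[OF GQ1] by simp
  have "(\<lambda>y. U *v y) ` L_Z = L_Z"
  proof
    show "(\<lambda>y. U *v y) ` L_Z \<subseteq> L_Z" using Z pres mvZ by (auto simp: L_Z_qf)
    show "L_Z \<subseteq> (\<lambda>y. U *v y) ` L_Z"
    proof
      fix y assume y: "y \<in> L_Z"
      have "y = U *v (V *v y)" by (simp add: matrix_vector_mul_assoc UV)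
      moreover have "V *v y \<in> L_Z"
      proof -
        have "qf (V *v y) = qf (U *v (V *v y))" using pres by simp
        also have "\<dots> = 0" using y by (simp add: matrix_vector_mul_assoc UV L_Z_qf)
        finally show ?thesis using y VZ mvZ by (auto simp: L_Z_qf)
      qed
      ultimately show "y \<in> (\<lambda>y. U *v y) ` L_Z" by blast
    qed
  qed
  then show ?thesis using inv by (simp add: Aut_L_Z_def)
qed

lemma odd_sq8: "odd (x::int) \<Longrightarrow> \<exists>k. x^2 = 8*k+1"
proof -
  assume "odd x" then obtain m where m: "x = 2*m+1" by (metis oddE)
  have "even (m*(m+1))" by simp
  then obtain t where t: "m*(m+1) = 2*t" by (metis evenE)
  have "x^2 = 4*(m*(m+1)) + 1" unfolding m by (simp add: power2_eq_square algebra_simps)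
  then show ?thesis using t by (intro exI[of _ t]) simp
qed

lemma units_int: "(l::real) \<in> \<int> \<Longrightarrow> m \<in> \<int> \<Longrightarrow> l * m = 1 \<Longrightarrow> l = 1 \<or> l = -1"
proof -
  assume "l \<in> \<int>" "m \<in> \<int>" "l*m = 1"
  then obtain a b :: int where "l = of_int a" "m = of_int b" "a * b = 1"
    by (metis Ints_cases of_int_eq_1_iff of_int_mult)
  then show ?thesis using zmult_eq_1_iff[of a b] by auto
qed

lemma not_neg:
  assumes "\<forall>i j. G U i j = (-1) * Q_L$i$j"
  shows False
proof -
  have sc: "qf (U *v z) = - qf z" for z using qf_scale[OF assms] by simp
  define a where "a = U$1$2"
  define b where "b = U$1$3"
  show False
  proof (cases "a = 0 \<and> b = 0")
    case True
    have "(U *v mk4 0 1 0 0) $ 1 = 0" using True by (simp add: mv a_def)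
    moreover have "qf (U *v mk4 0 1 0 0) = -1" using sc by (simp add: qf_def)
    ultimately show False by (simp add: qf_def) (smt (verit) zero_le_power2)
  next
    case False
    have "(U *v mk4 0 b (-a) 0) $ 1 = 0" by (simp add: mv a_def b_def algebra_simps)
    moreover have "qf (U *v mk4 0 b (-a) 0) = -(b^2 + a^2)" using sc by (simp add: qf_def)
    moreover have "b^2 + a^2 > 0" using False sum_power2_eq_zero_iff[of b a] by (smt (verit) zero_le_power2)
    ultimately show False by (simp add: qf_def) (smt (verit) zero_le_power2)
  qed
qed

lemma half_odd_contra:
  fixes m :: int and t :: "4 \<Rightarrow> int"
  assumes m: "odd m" and t: "\<And>i. U$1$1 - U$i$1 = of_int (t i)" and u: "U$1$1 + U$1$1 = of_int m"
    and g: "G U 1 1 = -1"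
  shows False
proof -
  define a where "a i = m - 2 * t i" for i
  have aU: "of_int (a i) = 2 * U$i$1" for i using t[of i] u by (simp add: a_def)
  have ao: "odd (a i)" for i using m by (simp add: a_def)
  have "-((of_int (a 1))^2) + (of_int (a 2))^2 + (of_int (a 3))^2 + (of_int (a 4))^2 = 4 * G U 1 1"
    unfolding aU G_def by (simp add: power2_eq_square algebra_simps)
  then have "-((of_int (a 1))^2) + (of_int (a 2))^2 + (of_int (a 3))^2 + (of_int (a 4))^2 = (of_int (-4) :: real)"
    using g by simp
  then have e: "-((a 1)^2) + (a 2)^2 + (a 3)^2 + (a 4)^2 = -4"
    by (metis (mono_tags) of_int_eq_iff of_int_add of_int_minus of_int_power)
  obtain k1 k2 k3 k4 where "(a 1)^2 = 8*k1+1" "(a 2)^2 = 8*k2+1" "(a 3)^2 = 8*k3+1" "(a 4)^2 = 8*k4+1"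
    using odd_sq8[OF ao] by metis
  with e show False by presburger
qed

lemma Aut_sub_O: assumes "U \<in> Aut_L_Z" shows "U \<in> O31Z"
proof -
  have inv: "invertible U" and img: "(\<lambda>y. U *v y) ` L_Z = L_Z" using assms by (auto simp: Aut_L_Z_def)
  obtain W where UW: "U ** W = mat 1" and WU: "W ** U = mat 1" using inv invertible_def by blast
  have HU: "U *v y \<in> L_Z" if "y \<in> L_Z" for y using img that by blast
  have HW: "W *v y \<in> L_Z" if yL: "y \<in> L_Z" for y
  proof -
    obtain z where "z \<in> L_Z" "y = U *v z" using img yL by force
    then show ?thesis by (simp add: matrix_vector_mul_assoc WU)
  qed
  obtain l where l: "\<forall>i j. G U i j = l * Q_L$i$j" "l \<in> \<int>" using into(1)[OF HU] by blast
  obtain m where m: "\<forall>i j. G W i j = m * Q_L$i$j" "m \<in> \<int>" using into(1)[OF HW] by blast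
  have "qf (U *v (W *v mk4 1 0 0 0)) = l * (m * qf (mk4 1 0 0 0))"
    using qf_scale[OF l(1)] qf_scale[OF m(1)] by simp
  then have "l * m = 1" by (simp add: matrix_vector_mul_assoc UW qf_def)
  then have "l = 1 \<or> l = -1" using units_int l(2) m(2) by blast
  then have "l = 1" using not_neg[of U] l(1) by auto
  then have GQ: "\<forall>i j. G U i j = Q_L$i$j" using l(1) by simp
  define V where "V = Q_L ** transpose U ** Q_L"
  have VU: "V ** U = mat 1" using V_left[OF GQ] V_def by simp
  have "V = V ** (U ** W)" using UW by simp
  also have "\<dots> = W" by (metis VU matrix_mul_assoc matrix_mul_lid)
  finally have VW: "V = W" .
  have row: "U$i$1 + U$i$k \<in> \<int>" "U$i$1 - U$i$k \<in> \<int>" for i k using into(2,3)[OF HU] by auto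
  have roww: "W$i$1 + W$i$k \<in> \<int>" for i k using into(2)[OF HW] by auto
  have col: "U$1$j - U$i$j \<in> \<int>" for i j
  proof (cases "i = 1")
    case True then show ?thesis by simp
  next
    case False
    have "U$1$j - U$i$j = -(if j = 1 then -1 else 1) * (W$j$1 + W$j$i)"
      unfolding VW[symmetric] V_def Vent using False by (auto simp: algebra_simps)
    also have "\<dots> \<in> \<int>" using roww by (intro Ints_mult) auto
    finally show ?thesis .
  qed
  have all: "U$1$1 - U$i$j \<in> \<int>" for i j
  proof -
    have "U$1$1 - U$i$j = (U$1$1 - U$i$1) + (U$i$1 - U$i$j)" by simp
    also have "\<dots> \<in> \<int>" using col row by (intro Ints_add) auto
    finally show ?thesis .
  qed
  have Z: "\<forall>i j. U$i$j \<in> \<int>"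
  proof (cases "U$1$1 \<in> \<int>")
    case True
    show ?thesis
    proof (intro allI)
      fix i j
      have "U$i$j = U$1$1 - (U$1$1 - U$i$j)" by simp
      also have "\<dots> \<in> \<int>" using True all by (intro Ints_diff) auto
      finally show "U$i$j \<in> \<int>" .
    qed
  next
    case False
    obtain mm where mm: "U$1$1 + U$1$1 = of_int mm" using row(1)[of 1 1] by (metis Ints_cases)
    have "odd mm"
    proof
      assume "even mm"
      then obtain k where "mm = 2*k" by (metis evenE)
      then have "U$1$1 = of_int k" using mm by simp
      then show False using False by simp
    qed
    have "\<forall>i. \<exists>t. U$1$1 - U$i$1 = of_int t" using all by (metis Ints_cases)
    then obtain t where "\<And>i. U$1$1 - U$i$1 = of_int (t i)" by metis
    from half_odd_contra[OF \<open>odd mm\<close> this mm] GQ show ?thesis by (simp add: QL)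
  qed
  show ?thesis using Z GQ O31Z_iff by blast
qed

theorem lemma7p3:
  shows "Aut_L_Z = O31Z"
  using Aut_sub_O O_sub_Aut by blast

end
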